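(* Let $\overline{\mathbb{R}}=\mathbb{R}\cup\{-\infty\}$, and let $A\in\overline{\mathbb{R}}^{n\times m}$, $B\in\overline{\mathbb{R}}^{n\times k}$, $C\in\overline{\mathbb{R}}^{k\times m}$. Let $N=\max_{i\in[n],\,j\in[m]}\max\bigl\{A_{ij},\ \max_{1\le d\le k}\{B_{id}+C_{dj}\}\bigr\}$ and $M=\exp\{N\}$. If $\|A-B\otimes C\|_F^2\le\lambda$, then $\|\exp\{A\}-\exp\{B\}\boxtimes\exp\{C\}\|_F^2\le M^2\lambda$.
   Context: The tropical (max-plus) product of $B\in\overline{\mathbb{R}}^{n\times k}$ and $C\in\overline{\mathbb{R}}^{k\times m}$ is $(B\otimes C)_{ij}=\max_{s=1}^{k}\{B_{is}+C_{sj}\}$. The max-times (subtropical) product of nonnegative matrices $X\in[0,\infty)^{n\times k}$, $Y\in[0,\infty)^{k\times m}$ is $(X\boxtimes Y)_{ij}=\max_{s=1}^k X_{is}Y_{sj}$. $\exp\{\cdot\}$ applied to a matrix acts entrywise, with the convention $\exp(-\infty)=0$. $\|\cdot\|_F$ is the Frobenius norm and $[n]=\{1,\dots,n\}$. *)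

theory Defs
  imports "HOL-Analysis.Analysis" "HOL-Library.Extended_Real"
begin

text \<open>Matrices are functions nat => nat => _ , used on index ranges {..<n} x {..<m}.
  Entries of tropical matrices live in ereal; the hypotheses exclude +infinity,
  so they range over R union {-infinity}.\<close>

definition trop_prod :: "nat \<Rightarrow> (nat \<Rightarrow> nat \<Rightarrow> ereal) \<Rightarrow> (nat \<Rightarrow> nat \<Rightarrow> ereal) \<Rightarrow> nat \<Rightarrow> nat \<Rightarrow> ereal" where
  "trop_prod k B C i j = (SUP s\<in>{..<k}. B i s + C s j)"

text \<open>Max-times product of nonnegative real matrices (max of nonnegative values;
  inserting 0 only matters for k = 0, where it gives the empty max = 0 = exp(-infinity)).\<close>
definition maxtimes_prod :: "nat \<Rightarrow> (nat \<Rightarrow> nat \<Rightarrow> real) \<Rightarrow> (nat \<Rightarrow> nat \<Rightarrow> real) \<Rightarrow> nat \<Rightarrow> nat \<Rightarrow> real" where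
  "maxtimes_prod k X Y i j = Max (insert 0 ((\<lambda>s. X i s * Y s j) ` {..<k}))"

definition exp_ereal :: "ereal \<Rightarrow> real" where
  "exp_ereal x = (if x = -\<infinity> then 0 else exp (real_of_ereal x))"

definition ediff_sq :: "ereal \<Rightarrow> ereal \<Rightarrow> ereal" where
  "ediff_sq a b = (if a = -\<infinity> \<and> b = -\<infinity> then 0
                   else if a = -\<infinity> \<or> b = -\<infinity> then \<infinity>
                   else ereal ((real_of_ereal a - real_of_ereal b)^2))"

definition frob_sq_ereal :: "nat \<Rightarrow> nat \<Rightarrow> (nat \<Rightarrow> nat \<Rightarrow> ereal) \<Rightarrow> (nat \<Rightarrow> nat \<Rightarrow> ereal) \<Rightarrow> ereal" where
  "frob_sq_ereal n m A D = (\<Sum>i<n. \<Sum>j<m. ediff_sq (A i j) (D i j))"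

definition frob_sq :: "nat \<Rightarrow> nat \<Rightarrow> (nat \<Rightarrow> nat \<Rightarrow> real) \<Rightarrow> (nat \<Rightarrow> nat \<Rightarrow> real) \<Rightarrow> real" where
  "frob_sq n m X Y = (\<Sum>i<n. \<Sum>j<m. (X i j - Y i j)^2)"

end

theory Submission
  imports Defs
begin

lemma SUP_attained:
  fixes f :: "'a \<Rightarrow> ereal"
  assumes "finite S" "S \<noteq> {}"
  shows "\<exists>s\<in>S. (SUP x\<in>S. f x) = f s"
proof -
  have "(SUP x\<in>S. f x) = Max (f ` S)" using assms by (simp add: cSup_eq_Max)
  moreover have "Max (f ` S) \<in> f ` S" using assms by simp
  ultimately show ?thesis by auto
qed

lemma SUP_not_inf:
  fixes f :: "'a \<Rightarrow> ereal"
  assumes "finite S" "\<forall>x\<in>S. f x \<noteq> \<infinity>"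
  shows "(SUP x\<in>S. f x) \<noteq> \<infinity>"
proof (cases "S = {}")
  case True then show ?thesis by (simp add: bot_ereal_def)
next
  case False then show ?thesis using SUP_attained[OF assms(1) False, of f] assms(2) by auto
qed

lemma exp_ereal_nonneg: "0 \<le> exp_ereal x"
  by (simp add: exp_ereal_def)

lemma exp_ereal_add:
  assumes "x \<noteq> \<infinity>" "y \<noteq> \<infinity>"
  shows "exp_ereal (x + y) = exp_ereal x * exp_ereal y"
  using assms by (cases x; cases y) (auto simp: exp_ereal_def exp_add)

lemma exp_ereal_mono:
  assumes "x \<le> y" "y \<noteq> \<infinity>"
  shows "exp_ereal x \<le> exp_ereal y"
  using assms by (cases x; cases y) (auto simp: exp_ereal_def)

lemma exp_trop:
  assumes "\<forall>d<k. B i d \<noteq> \<infinity>" "\<forall>d<k. C d j \<noteq> \<infinity>"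
  shows "exp_ereal (trop_prod k B C i j) =
         maxtimes_prod k (\<lambda>i d. exp_ereal (B i d)) (\<lambda>d j. exp_ereal (C d j)) i j"
proof (cases "k = 0")
  case True then show ?thesis
    by (simp add: trop_prod_def maxtimes_prod_def exp_ereal_def bot_ereal_def)
next
  case False
  then obtain s0 where s0: "s0 < k" "trop_prod k B C i j = B i s0 + C s0 j"
    using SUP_attained[of "{..<k}" "\<lambda>s. B i s + C s j"] unfolding trop_prod_def by auto
  have le: "B i s + C s j \<le> trop_prod k B C i j" if "s < k" for s
    unfolding trop_prod_def using that by (auto intro: SUP_upper)
  have nf: "B i s0 + C s0 j \<noteq> \<infinity>" using assms s0(1) by simp
  show ?thesis unfolding maxtimes_prod_def
  proof (rule sym, rule Max_eqI)
    show "finite (insert 0 ((\<lambda>s. exp_ereal (B i s) * exp_ereal (C s j)) ` {..<k}))" by simp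
  next
    fix y assume "y \<in> insert 0 ((\<lambda>s. exp_ereal (B i s) * exp_ereal (C s j)) ` {..<k})"
    then show "y \<le> exp_ereal (trop_prod k B C i j)"
    proof
      assume "y = 0" then show ?thesis by (simp add: exp_ereal_nonneg)
    next
      assume "y \<in> (\<lambda>s. exp_ereal (B i s) * exp_ereal (C s j)) ` {..<k}"
      then obtain s where s: "s < k" "y = exp_ereal (B i s) * exp_ereal (C s j)" by auto
      then have "y = exp_ereal (B i s + C s j)" using assms by (simp add: exp_ereal_add)
      also have "\<dots> \<le> exp_ereal (trop_prod k B C i j)"
        using le[OF s(1)] s0 nf by (intro exp_ereal_mono) auto
      finally show ?thesis .
    qed
  next
    show "exp_ereal (trop_prod k B C i j) \<in> insert 0 ((\<lambda>s. exp_ereal (B i s) * exp_ereal (C s j)) ` {..<k})"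
      using s0 assms by (auto simp: exp_ereal_add)
  qed
qed

lemma exp_diff_bound:
  fixes x y :: real
  shows "\<bar>exp x - exp y\<bar> \<le> exp (max x y) * \<bar>x - y\<bar>"
proof -
  have key: "exp b - exp a \<le> exp b * (b - a)" if "a \<le> b" for a b :: real
  proof -
    have "1 + (a - b) \<le> exp (a - b)" by (rule exp_ge_add_one_self)
    then have "exp b * (1 + (a - b)) \<le> exp b * exp (a - b)" by simp
    also have "\<dots> = exp a" by (simp add: exp_diff)
    finally show ?thesis by (simp add: algebra_simps)
  qed
  show ?thesis
  proof (cases "x \<le> y")
    case True
    then show ?thesis using key[OF True] by (simp add: max_def abs_if)
  next
    case False
    then have yx: "y \<le> x" by simp
    show ?thesis using key[OF yx] False by (simp add: max_def abs_if)
  qed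
qed

lemma entry:
  assumes "a \<noteq> \<infinity>" "t \<noteq> \<infinity>" "ediff_sq a t \<noteq> \<infinity>" "a \<le> N" "t \<le> N" "N \<noteq> \<infinity>"
  shows "(exp_ereal a - exp_ereal t)^2 \<le> (exp_ereal N)^2 * real_of_ereal (ediff_sq a t)"
proof (cases a)
  case (real x)
  then obtain y where y: "t = ereal y"
    using assms by (cases t) (auto simp: ediff_sq_def)
  obtain z where z: "N = ereal z" using assms real by (cases N) auto
  have xz: "x \<le> z" "y \<le> z" using assms real y z by auto
  have "\<bar>exp x - exp y\<bar> \<le> exp z * \<bar>x - y\<bar>"
  proof -
    have "\<bar>exp x - exp y\<bar> \<le> exp (max x y) * \<bar>x - y\<bar>" by (rule exp_diff_bound)
    also have "\<dots> \<le> exp z * \<bar>x - y\<bar>" using xz by (intro mult_right_mono) auto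
    finally show ?thesis .
  qed
  then have "\<bar>exp x - exp y\<bar>^2 \<le> (exp z * \<bar>x - y\<bar>)^2"
    by (intro power_mono) auto
  then show ?thesis using real y z
    by (simp add: exp_ereal_def ediff_sq_def power_mult_distrib)
next
  case PInf then show ?thesis using assms by simp
next
  case MInf
  then have "t = -\<infinity>" using assms by (cases t) (auto simp: ediff_sq_def)
  then show ?thesis using MInf by (simp add: exp_ereal_def ediff_sq_def)
qed

theorem theorem4:
  fixes n m k :: nat and A B C :: "nat \<Rightarrow> nat \<Rightarrow> ereal" and lam :: real
  assumes "\<forall>i<n. \<forall>j<m. A i j \<noteq> \<infinity>"
    and "\<forall>i<n. \<forall>d<k. B i d \<noteq> \<infinity>"
    and "\<forall>d<k. \<forall>j<m. C d j \<noteq> \<infinity>"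
    and "frob_sq_ereal n m A (trop_prod k B C) \<le> ereal lam"
  shows "frob_sq n m (\<lambda>i j. exp_ereal (A i j))
           (maxtimes_prod k (\<lambda>i d. exp_ereal (B i d)) (\<lambda>d j. exp_ereal (C d j)))
         \<le> (exp_ereal (SUP ij\<in>{..<n} \<times> {..<m}.
                 max (A (fst ij) (snd ij)) (SUP d\<in>{..<k}. B (fst ij) d + C d (snd ij))))\<^sup>2 * lam"
proof -
  define N where "N = (SUP ij\<in>{..<n} \<times> {..<m}.
                 max (A (fst ij) (snd ij)) (SUP d\<in>{..<k}. B (fst ij) d + C d (snd ij)))"
  define T where "T = trop_prod k B C"
  define M where "M = exp_ereal N"
  have Tdef: "T i j = (SUP d\<in>{..<k}. B i d + C d j)" for i j
    by (simp add: T_def trop_prod_def)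
  have Tnf: "T i j \<noteq> \<infinity>" if "i < n" "j < m" for i j
    unfolding Tdef using that assms(2,3) by (intro SUP_not_inf) auto
  have Nnf: "N \<noteq> \<infinity>"
    unfolding N_def using Tnf assms(1) by (intro SUP_not_inf) (auto simp: Tdef max_def)
  have aN: "A i j \<le> N" "T i j \<le> N" if "i < n" "j < m" for i j
  proof -
    have "max (A i j) (T i j) \<le> N"
      unfolding N_def Tdef using that
      by (intro SUP_upper2[where i="(i,j)"]) auto
    then show "A i j \<le> N" "T i j \<le> N" by auto
  qed
  have nn: "0 \<le> ediff_sq a b" for a b by (simp add: ediff_sq_def)
  have fin: "ediff_sq (A i j) (T i j) \<noteq> \<infinity>" if "i < n" "j < m" for i j
  proof
    assume inf: "ediff_sq (A i j) (T i j) = \<infinity>"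
    have "(\<Sum>j'<m. ediff_sq (A i j') (T i j')) = ediff_sq (A i j) (T i j) + (\<Sum>j'\<in>{..<m}-{j}. ediff_sq (A i j') (T i j'))"
      using that by (intro sum.remove) auto
    then have s1: "(\<Sum>j'<m. ediff_sq (A i j') (T i j')) = \<infinity>" using inf by simp
    have "(\<Sum>i'<n. \<Sum>j'<m. ediff_sq (A i' j') (T i' j')) = (\<Sum>j'<m. ediff_sq (A i j') (T i j')) + (\<Sum>i'\<in>{..<n}-{i}. \<Sum>j'<m. ediff_sq (A i' j') (T i' j'))"
      using that by (intro sum.remove) auto
    then have "(\<Sum>i'<n. \<Sum>j'<m. ediff_sq (A i' j') (T i' j')) = \<infinity>" using s1 by simp
    moreover have "(\<Sum>i'<n. \<Sum>j'<m. ediff_sq (A i' j') (T i' j')) \<le> ereal lam" using assms(4) by (simp add: frob_sq_ereal_def T_def)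
    ultimately show False by simp
  qed
  define d where "d i j = real_of_ereal (ediff_sq (A i j) (T i j))" for i j
  have ed: "ediff_sq (A i j) (T i j) = ereal (d i j)" if "i < n" "j < m" for i j
    using fin[OF that] nn[of "A i j" "T i j"] unfolding d_def
    by (cases "ediff_sq (A i j) (T i j)") auto
  have "ereal (\<Sum>i<n. \<Sum>j<m. d i j) = (\<Sum>i<n. \<Sum>j<m. ediff_sq (A i j) (T i j))"
    by (simp add: ed)
  also have "\<dots> \<le> ereal lam" using assms(4) by (simp add: frob_sq_ereal_def T_def)
  finally have sumle: "(\<Sum>i<n. \<Sum>j<m. d i j) \<le> lam" by simp
  have "frob_sq n m (\<lambda>i j. exp_ereal (A i j))
           (maxtimes_prod k (\<lambda>i d. exp_ereal (B i d)) (\<lambda>d j. exp_ereal (C d j)))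
       = (\<Sum>i<n. \<Sum>j<m. (exp_ereal (A i j) - exp_ereal (T i j))^2)"
    unfolding frob_sq_def T_def using assms(2,3)
    by (intro sum.cong refl) (simp add: exp_trop)
  also have "\<dots> \<le> (\<Sum>i<n. \<Sum>j<m. M^2 * d i j)"
    unfolding M_def d_def
    using assms(1) Tnf fin aN Nnf by (intro sum_mono entry) auto
  also have "\<dots> = M^2 * (\<Sum>i<n. \<Sum>j<m. d i j)" by (simp add: sum_distrib_left)
  also have "\<dots> \<le> M^2 * lam" using sumle by (intro mult_left_mono) auto
  finally show ?thesis unfolding M_def N_def .
qed

end
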